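(* Let $\mathbb{F}$ be a field with $\operatorname{char}\mathbb{F}\ne 2,3$, let $2\le m,n<\infty$, and let $P$ be an $n\times m$ matrix over $\mathbb{F}$ with $\operatorname{rank}P=r\ge 2$. Then the Munn algebra $\mathcal{A}=\mathfrak{M}(\mathbb{F}, m, n, P)$ is zero Jordan product determined.
   Context: $\mathfrak{M}(\mathbb{F}, m, n, P)$ is the $\mathbb{F}$-algebra of all $m\times n$ matrices over $\mathbb{F}$ with entrywise addition and scalar multiplication and product $A\bullet B=APB$. The Jordan product is $x\circ y = x\bullet y + y\bullet x$. An associative $\mathbb{F}$-algebra $\mathcal{A}$ is zero Jordan product determined if for every bilinear functional $\phi:\mathcal{A}\times\mathcal{A}\to\mathbb{F}$ such that $x\circ y=0$ implies $\phi(x,y)=0$ for all $x,y\in\mathcal{A}$, there exists a linear functional $\tau$ on $\mathcal{A}$ with $\phi(x,y)=\tau(x\circ y)$ for all $x,y\in\mathcal{A}$. *)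

theory Defs
  imports "HOL-Analysis.Analysis"
begin

text \<open>Matrices over a field 'a with m = CARD('m) rows and n = CARD('n) columns are
  elements of type 'a^'n^'m.  Entrywise scalar multiplication:\<close>

definition mscale :: "'a::field \<Rightarrow> 'a^'n^'m \<Rightarrow> 'a^'n^'m" where
  "mscale c A = (\<chi> i j. c * A $ i $ j)"

definition munn_mult :: "'a::field^'m^'n \<Rightarrow> 'a^'n^'m \<Rightarrow> 'a^'n^'m \<Rightarrow> 'a^'n^'m" where
  "munn_mult P A B = A ** P ** B"

definition munn_jordan :: "'a::field^'m^'n \<Rightarrow> 'a^'n^'m \<Rightarrow> 'a^'n^'m \<Rightarrow> 'a^'n^'m" where
  "munn_jordan P x y = munn_mult P x y + munn_mult P y x"

definition linear_functional :: "('a::field^'n^'m \<Rightarrow> 'a) \<Rightarrow> bool" where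
  "linear_functional \<tau> \<longleftrightarrow>
     (\<forall>x y. \<tau> (x + y) = \<tau> x + \<tau> y) \<and> (\<forall>c x. \<tau> (mscale c x) = c * \<tau> x)"

definition bilinear_functional :: "('a::field^'n^'m \<Rightarrow> 'a^'n^'m \<Rightarrow> 'a) \<Rightarrow> bool" where
  "bilinear_functional \<phi> \<longleftrightarrow> (\<forall>x. linear_functional (\<lambda>y. \<phi> x y)) \<and> (\<forall>y. linear_functional (\<lambda>x. \<phi> x y))"

definition munn_zero_jordan_product_determined :: "'a::field^'m^'n \<Rightarrow> ('n \<times> 'm) itself \<Rightarrow> bool" where
  "munn_zero_jordan_product_determined P _ \<longleftrightarrow>
     (\<forall>\<phi> :: 'a^'n^'m \<Rightarrow> 'a^'n^'m \<Rightarrow> 'a. bilinear_functional \<phi> \<longrightarrow>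
        (\<forall>x y. munn_jordan P x y = 0 \<longrightarrow> \<phi> x y = 0) \<longrightarrow>
        (\<exists>\<tau>. linear_functional \<tau> \<and> (\<forall>x y. \<phi> x y = \<tau> (munn_jordan P x y))))"

end

theory Submission
  imports Defs
begin


definition outer :: "'a::field^'m \<Rightarrow> 'a^'n \<Rightarrow> 'a^'n^'m" where
  "outer u v = (\<chi> i j. u$i * v$j)"
definition bb :: "'a::field^'m^'n \<Rightarrow> 'a^'n \<Rightarrow> 'a^'m \<Rightarrow> 'a" where
  "bb P v s = (\<Sum>j\<in>UNIV. \<Sum>k\<in>UNIV. v$j * P$j$k * s$k)"

lemma outer_mult: "outer u v ** P ** outer s t = mscale (bb P v s) (outer u t)"
  unfolding vec_eq_iff
  apply (simp add: outer_def mscale_def matrix_matrix_mult_def bb_def sum_distrib_left sum_distrib_right)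
  apply (subst sum.swap)
  apply (simp add: mult_ac)
  done

lemma jordan_outer: "munn_jordan P (outer u v) (outer s t) =
   mscale (bb P v s) (outer u t) + mscale (bb P t u) (outer s v)"
  by (simp add: munn_jordan_def munn_mult_def outer_mult)

lemma outer_add1: "outer (u + u') v = outer u v + outer u' v"
  by (simp add: outer_def vec_eq_iff algebra_simps)
lemma outer_add2: "outer u (v + v') = outer u v + outer u v'"
  by (simp add: outer_def vec_eq_iff algebra_simps)
lemma outer_scale1: "outer (c *s u) v = mscale c (outer u v)"
  by (simp add: outer_def mscale_def vec_eq_iff algebra_simps)
lemma outer_scale2: "outer u (c *s v) = mscale c (outer u v)"
  by (simp add: outer_def mscale_def vec_eq_iff algebra_simps)

lemma bb_add1: "bb P (v + v') s = bb P v s + bb P v' s"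
  by (simp add: bb_def algebra_simps sum.distrib)
lemma bb_add2: "bb P v (s + s') = bb P v s + bb P v s'"
  by (simp add: bb_def algebra_simps sum.distrib)
lemma bb_scale1: "bb P (c *s v) s = c * bb P v s"
  by (simp add: bb_def algebra_simps sum_distrib_left)
lemma bb_scale2: "bb P v (c *s s) = c * bb P v s"
  by (simp add: bb_def algebra_simps sum_distrib_left)
lemma bb_diff1: "bb P (v - v') s = bb P v s - bb P v' s"
  by (simp add: bb_def algebra_simps sum_subtractf)
lemma bb_diff2: "bb P v (s - s') = bb P v s - bb P v s'"
  by (simp add: bb_def algebra_simps sum_subtractf)

lemma mscale_0[simp]: "mscale 0 x = 0" by (simp add: mscale_def vec_eq_iff)
lemma mscale_1[simp]: "mscale 1 x = x" by (simp add: mscale_def vec_eq_iff)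
lemma mscale_add: "mscale c (x + y) = mscale c x + mscale c y"
  by (simp add: mscale_def vec_eq_iff algebra_simps)
lemma mscale_mscale: "mscale c (mscale d x) = mscale (c*d) x"
  by (simp add: mscale_def vec_eq_iff algebra_simps)
lemma mscale_minus1: "mscale (-1) x = - x"
  by (simp add: mscale_def vec_eq_iff)
lemma mscale_mult1: "mscale c x ** P ** y = mscale c (x ** P ** y)"
  by (simp add: mscale_def vec_eq_iff matrix_matrix_mult_def sum_distrib_left sum_distrib_right mult_ac)
lemma mscale_mult2: "x ** P ** mscale c y = mscale c (x ** P ** y)"
  by (simp add: mscale_def vec_eq_iff matrix_matrix_mult_def sum_distrib_left sum_distrib_right mult_ac)

lemma lf_add: "linear_functional f \<Longrightarrow> f (x + y) = f x + f y"
  by (simp add: linear_functional_def)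
lemma lf_scale: "linear_functional f \<Longrightarrow> f (mscale c x) = c * f x"
  by (simp add: linear_functional_def)
lemma lf_zero: "linear_functional f \<Longrightarrow> f 0 = 0"
  using lf_scale[of f 0 0] by simp
lemma lf_neg: "linear_functional f \<Longrightarrow> f (- x) = - f x"
  using lf_scale[of f "-1" x] by (simp add: mscale_minus1)
lemma lf_diff: "linear_functional f \<Longrightarrow> f (x - y) = f x - f y"
  using lf_add[of f x "- y"] lf_neg[of f y] by simp
lemma lf_sum: "linear_functional f \<Longrightarrow> f (sum g S) = (\<Sum>i\<in>S. f (g i))"
  by (induction S rule: infinite_finite_induct) (auto simp: lf_zero lf_add)

lemma my_rdistrib: "((B + C) ** A) = (B ** A) + (C ** A)"
  by (simp add: matrix_matrix_mult_def vec_eq_iff sum.distrib algebra_simps)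

lemma J_add1: "munn_jordan P (x + y) z = munn_jordan P x z + munn_jordan P y z"
  by (simp add: munn_jordan_def munn_mult_def matrix_add_ldistrib my_rdistrib algebra_simps)
lemma J_sym: "munn_jordan P x y = munn_jordan P y x"
  by (simp add: munn_jordan_def add.commute)
lemma J_add2: "munn_jordan P z (x + y) = munn_jordan P z x + munn_jordan P z y"
  by (metis J_sym J_add1)
lemma J_scale1: "munn_jordan P (mscale c x) z = mscale c (munn_jordan P x z)"
  by (simp add: munn_jordan_def munn_mult_def mscale_mult1 mscale_mult2 mscale_add)
lemma J_scale2: "munn_jordan P z (mscale c x) = mscale c (munn_jordan P z x)"
  by (metis J_sym J_scale1)
lemma J_neg1: "munn_jordan P (- x) z = - munn_jordan P x z"
  by (metis J_scale1 mscale_minus1)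
lemma J_diff1: "munn_jordan P (x - y) z = munn_jordan P x z - munn_jordan P y z"
  by (metis J_add1 J_neg1 diff_conv_add_uminus)
lemma J_diff2: "munn_jordan P z (x - y) = munn_jordan P z x - munn_jordan P z y"
  by (metis J_sym J_diff1)



locale bil =
  fixes G :: "'a::field^'n \<Rightarrow> 'a^'m \<Rightarrow> 'a"
  assumes a1: "\<And>x y s. G (x + y) s = G x s + G y s"
    and sc1: "\<And>c x s. G (c *s x) s = c * G x s"
    and a2: "\<And>v x y. G v (x + y) = G v x + G v y"
    and sc2: "\<And>c v x. G v (c *s x) = c * G v x"
begin

lemma d1: "G (x - y) s = G x s - G y s"
proof -
  have "x - y = x + (-1) *s y" by (simp add: vec_eq_iff)
  then show ?thesis by (metis a1 sc1 mult_minus1 diff_conv_add_uminus)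
qed
lemma d2: "G v (x - y) = G v x - G v y"
proof -
  have "x - y = x + (-1) *s y" by (simp add: vec_eq_iff)
  then show ?thesis by (metis a2 sc2 mult_minus1 diff_conv_add_uminus)
qed

lemma expand4: "G (a *s v1 + x) (b *s s1 + y) = a*b*G v1 s1 + a*G v1 y + b*G x s1 + G x y"
  by (simp add: a1 a2 sc1 sc2 algebra_simps)

lemma dec:
  fixes P :: "'a^'m^'n"
  assumes n: "bb P v1 s1 = 1"
  shows "G v s = bb P v s1 * bb P v1 s * G v1 s1 + bb P v s1 * G v1 (s - bb P v1 s *s s1)
     + bb P v1 s * G (v - bb P v s1 *s v1) s1 + G (v - bb P v s1 *s v1) (s - bb P v1 s *s s1)"
proof -
  have "v = bb P v s1 *s v1 + (v - bb P v s1 *s v1)" "s = bb P v1 s *s s1 + (s - bb P v1 s *s s1)"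
    by simp_all
  then show ?thesis using expand4 by (metis mult.commute)
qed

lemma mu:
  fixes P :: "'a^'m^'n"
  assumes n: "bb P v1 s1 = 1" and z: "\<And>v s. bb P v s = 0 \<Longrightarrow> G v s = 0"
    and x: "bb P x s1 = 0" and y: "bb P v1 y = 0"
  shows "G x y = bb P x y * G v1 s1"
proof (cases "bb P x y = 0")
  case True then show ?thesis using z by simp
next
  case False
  define d where "d = bb P x y"
  have "bb P (1 *s v1 + x) ((- 1/d) *s y + s1) = 0"
    using n x y False by (simp add: bb_add1 bb_add2 bb_diff1 bb_diff2 bb_scale1 bb_scale2 d_def)
  then have "G (1 *s v1 + x) ((- 1/d) *s y + s1) = 0" using z by blast
  then have "G v1 s1 - (1/d) * G x y = 0"
    using z[OF y] z[OF x] by (simp add: a1 a2 sc1 sc2 d1 d2 algebra_simps)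
  then show ?thesis using False by (simp add: d_def field_simps)
qed

lemma lemB:
  fixes P :: "'a^'m^'n"
  assumes n: "bb P v1 s1 = 1" and z: "\<And>v s. bb P v s = 0 \<Longrightarrow> G v s = 0"
  shows "G v s = bb P v s * G v1 s1"
proof -
  define a where "a = bb P v s1"
  define b where "b = bb P v1 s"
  have e1: "bb P (v - a *s v1) s1 = 0" using n by (simp add: bb_diff1 bb_scale1 a_def)
  have e2: "bb P v1 (s - b *s s1) = 0" using n by (simp add: bb_diff2 bb_scale2 b_def)
  have e3: "bb P (v - a *s v1) (s - b *s s1) = bb P v s - a * b"
    using n by (simp add: bb_diff1 bb_diff2 bb_scale1 bb_scale2 a_def b_def algebra_simps)
  have "G v s = a * b * G v1 s1 + a * G v1 (s - b *s s1) + b * G (v - a *s v1) s1 + G (v - a *s v1) (s - b *s s1)"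
    using dec[OF n, of v s] by (simp add: a_def b_def)
  also have "\<dots> = a * b * G v1 s1 + (bb P v s - a * b) * G v1 s1"
    using z[OF e1] z[OF e2] mu[OF n z e1 e2] e3 by simp
  finally show ?thesis by (simp add: algebra_simps)
qed

end


lemma unit_comp: "(mscale c (outer (axis i 1) (axis j 1)) :: 'a::field^'n^'m)$a$b = (if a = i then if b = j then c else 0 else 0)"
  by (simp add: mscale_def outer_def axis_def)

lemma mat_expand: "(x::'a::field^'n^'m) = (\<Sum>i\<in>UNIV. \<Sum>j\<in>UNIV. mscale (x$i$j) (outer (axis i 1) (axis j 1)))"
proof -
  have "(\<Sum>i\<in>UNIV. \<Sum>j\<in>UNIV. mscale (x$i$j) (outer (axis i 1) (axis j 1)))$a$b = x$a$b" for a b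
  proof -
    have "(\<Sum>i\<in>UNIV. \<Sum>j\<in>UNIV. mscale (x$i$j) (outer (axis i 1) (axis j 1)))$a$b
        = (\<Sum>i\<in>UNIV. \<Sum>j\<in>UNIV. if a = i then if b = j then x$i$j else 0 else 0)"
      by (simp only: sum_component unit_comp)
    also have "\<dots> = (\<Sum>i\<in>UNIV. if a = i then x$i$b else 0)"
    proof (rule sum.cong)
      fix i show "(\<Sum>j\<in>UNIV. if a = i then if b = j then x$i$j else 0 else 0) = (if a = i then x$i$b else 0)"
        by (cases "a = i") simp_all
    qed simp
    also have "\<dots> = x$a$b" by simp
    finally show ?thesis .
  qed
  then show ?thesis by (simp add: vec_eq_iff)
qed

lemma vunit_comp: "(c *s axis i 1 :: 'a::field^'n)$a = (if a = i then c else 0)"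
  by (simp add: axis_def)

lemma vec_expand: "(u::'a::field^'n) = (\<Sum>i\<in>UNIV. u$i *s axis i 1)"
proof -
  have "(\<Sum>i\<in>UNIV. u$i *s axis i 1)$a = u$a" for a
    by (simp only: sum_component vunit_comp) simp
  then show ?thesis by (simp add: vec_eq_iff)
qed

lemma bilin_expand:
  assumes l1: "\<And>y. linear_functional (\<lambda>x. g x y)" and l2: "\<And>x. linear_functional (\<lambda>y. g x y)"
  shows "g (x::'a::field^'n^'m) y = (\<Sum>i\<in>UNIV. \<Sum>j\<in>UNIV. \<Sum>k\<in>UNIV. \<Sum>l\<in>UNIV.
      x$i$j * y$k$l * g (outer (axis i 1) (axis j 1)) (outer (axis k 1) (axis l 1)))"
proof -
  have e1: "g x y' = (\<Sum>i\<in>UNIV. \<Sum>j\<in>UNIV. x$i$j * g (outer (axis i 1) (axis j 1)) y')" for x y'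
  proof -
    have "g x y' = g (\<Sum>i\<in>UNIV. \<Sum>j\<in>UNIV. mscale (x$i$j) (outer (axis i 1) (axis j 1))) y'"
      by (simp only: mat_expand[of x, symmetric])
    also have "\<dots> = (\<Sum>i\<in>UNIV. \<Sum>j\<in>UNIV. x$i$j * g (outer (axis i 1) (axis j 1)) y')"
      by (simp only: lf_sum[OF l1] lf_scale[OF l1])
    finally show ?thesis .
  qed
  have e2: "g x' y = (\<Sum>k\<in>UNIV. \<Sum>l\<in>UNIV. y$k$l * g x' (outer (axis k 1) (axis l 1)))" for x'
  proof -
    have "g x' y = g x' (\<Sum>i\<in>UNIV. \<Sum>j\<in>UNIV. mscale (y$i$j) (outer (axis i 1) (axis j 1)))"
      by (simp only: mat_expand[of y, symmetric])
    also have "\<dots> = (\<Sum>i\<in>UNIV. \<Sum>j\<in>UNIV. y$i$j * g x' (outer (axis i 1) (axis j 1)))"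
      by (simp only: lf_sum[OF l2] lf_scale[OF l2])
    finally show ?thesis .
  qed
  show ?thesis
    apply (subst e1)
    apply (subst e2)
    apply (simp only: sum_distrib_left mult.assoc)
    done
qed

lemma vlin_sum:
  assumes a: "\<And>x y. f (x + y) = f x + f y" and s: "\<And>c x. f (c *s x) = (c::'a::field) * f x"
  shows "f (sum g S) = (\<Sum>i\<in>S. f (g i))"
proof -
  have z: "f 0 = 0" using s[of 0 0] by simp
  show ?thesis
  proof (induction S rule: infinite_finite_induct)
    case (infinite A) then show ?case using z by simp
  next
    case empty then show ?case using z by simp
  next
    case (insert x F) then show ?case by (simp add: a)
  qed
qed

lemma vbilin_expand:
  assumes a1: "\<And>x y t. g (x + y) t = g x t + g y t" and s1: "\<And>c x t. g (c *s x) t = (c::'a::field) * g x t"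
    and a2: "\<And>u x y. g u (x + y) = g u x + g u y" and s2: "\<And>c u x. g u (c *s x) = c * g u x"
  shows "g (u::'a^'m) (t::'a^'n) = (\<Sum>i\<in>UNIV. \<Sum>l\<in>UNIV. u$i * t$l * g (axis i 1) (axis l 1))"
proof -
  have e1: "g u t' = (\<Sum>i\<in>UNIV. u$i * g (axis i 1) t')" for t'
  proof -
    have "g u t' = g (\<Sum>i\<in>UNIV. u$i *s axis i 1) t'" by (simp only: vec_expand[of u, symmetric])
    also have "\<dots> = (\<Sum>i\<in>UNIV. u$i * g (axis i 1) t')"
      by (simp only: vlin_sum[where f="\<lambda>x. g x t'", OF a1 s1] s1)
    finally show ?thesis .
  qed
  have e2: "g u' t = (\<Sum>l\<in>UNIV. t$l * g u' (axis l 1))" for u'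
  proof -
    have "g u' t = g u' (\<Sum>i\<in>UNIV. t$i *s axis i 1)" by (simp only: vec_expand[of t, symmetric])
    also have "\<dots> = (\<Sum>i\<in>UNIV. t$i * g u' (axis i 1))"
      by (simp only: vlin_sum[where f="\<lambda>x. g u' x", OF a2 s2] s2)
    finally show ?thesis .
  qed
  show ?thesis
    apply (subst e1)
    apply (subst e2)
    apply (simp only: sum_distrib_left mult.assoc)
    done
qed



locale zj =
  fixes P :: "'a::field^'m^'n" and phi :: "'a^'n^'m \<Rightarrow> 'a^'n^'m \<Rightarrow> 'a"
    and v1 v2 :: "'a^'n" and s1 s2 :: "'a^'m"
  assumes bil: "bilinear_functional phi"
    and H: "\<And>x y. munn_jordan P x y = 0 \<Longrightarrow> phi x y = 0"
    and n11: "bb P v1 s1 = 1" and n22: "bb P v2 s2 = 1"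
    and n12: "bb P v1 s2 = 0" and n21: "bb P v2 s1 = 0"
    and two: "(2::'a) \<noteq> 0"
begin

lemma l1: "linear_functional (\<lambda>x. phi x y)" using bil by (simp add: bilinear_functional_def)
lemma l2: "linear_functional (\<lambda>y. phi x y)" using bil by (simp add: bilinear_functional_def)

lemma p_add1: "phi (x + y) z = phi x z + phi y z" using lf_add[OF l1] .
lemma p_add2: "phi z (x + y) = phi z x + phi z y" using lf_add[OF l2] .
lemma p_sc1: "phi (mscale c x) z = c * phi x z" using lf_scale[OF l1] .
lemma p_sc2: "phi z (mscale c x) = c * phi z x" using lf_scale[OF l2] .
lemma p_diff1: "phi (x - y) z = phi x z - phi y z" using lf_diff[OF l1] .
lemma p_diff2: "phi z (x - y) = phi z x - phi z y" using lf_diff[OF l2] .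

lemma Phi_vs: "bil (\<lambda>v s. phi (outer u v) (outer s t))"
  by unfold_locales (simp_all add: outer_add1 outer_add2 outer_scale1 outer_scale2 p_add1 p_add2 p_sc1 p_sc2)

lemma F1: "bb P v s = 0 \<Longrightarrow> bb P t u = 0 \<Longrightarrow> phi (outer u v) (outer s t) = 0"
  by (intro H) (simp add: jordan_outer)

lemma sym0:
  assumes "munn_jordan P x x = 0" "munn_jordan P y y = 0"
  shows "phi x y = phi y x"
proof -
  have "munn_jordan P (x + y) (x - y) = 0"
    using assms by (simp add: J_add1 J_diff2 J_sym[of P y x])
  then have "phi (x + y) (x - y) = 0" by (rule H)
  moreover have "phi x x = 0" "phi y y = 0" using assms H by auto
  ultimately show ?thesis by (simp add: p_add1 p_diff2)
qed

lemma lemS: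
  assumes ef: "munn_jordan P e f = 0" and yy: "munn_jordan P y y = 0"
    and ey: "munn_jordan P e y = y" and fy: "munn_jordan P f y = y"
  shows "phi e y = phi y e"
proof -
  have "munn_jordan P y (e - f) = 0"
    using ey fy by (simp add: J_diff2 J_sym[of P y e] J_sym[of P y f])
  then have h1: "phi y (e - f) = 0" by (rule H)
  have "munn_jordan P (e + y) (f - y) = 0"
    using ef yy ey fy by (simp add: J_add1 J_diff2 J_sym[of P y f])
  then have h2: "phi (e + y) (f - y) = 0" by (rule H)
  have "phi e f = 0" "phi y y = 0" using ef yy H by auto
  with h1 h2 show ?thesis by (simp add: p_add1 p_diff1 p_diff2)
qed

lemma C1:
  assumes "bb P t u = 0"
  shows "phi (outer u v) (outer s t) = bb P v s * phi (outer u v1) (outer s1 t)"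
proof -
  interpret bil "\<lambda>v s. phi (outer u v) (outer s t)" by (rule Phi_vs)
  show ?thesis using lemB[OF n11] F1 assms by blast
qed

lemma K1:
  assumes "bb P v1 s' = 0"
  shows "phi (outer s1 v1) (outer s' v1) = phi (outer s' v1) (outer s1 v1)"
proof -
  have sig: "phi (outer s1 v1) (outer \<sigma> v1) = phi (outer \<sigma> v1) (outer s1 v1)"
    if "bb P v1 \<sigma> = 0" "bb P v2 \<sigma> = 1" for \<sigma>
    by (rule lemS[where f="outer \<sigma> v2"]) (simp_all add: jordan_outer n11 n21 that)
  define k where "k = 1 - bb P v2 s'"
  have "bb P v1 (s' + k *s s2) = 0" "bb P v2 (s' + k *s s2) = 1"
    using assms by (simp_all add: bb_add2 bb_diff2 bb_scale2 n12 n22 k_def)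
  then have "phi (outer s1 v1) (outer (s' + k *s s2) v1) = phi (outer (s' + k *s s2) v1) (outer s1 v1)"
    by (rule sig)
  moreover have "phi (outer s1 v1) (outer s2 v1) = phi (outer s2 v1) (outer s1 v1)"
    by (rule sig) (simp_all add: n12 n22)
  ultimately show ?thesis
    by (simp add: outer_add1 outer_scale1 p_add1 p_add2 p_sc1 p_sc2)
qed

lemma K2:
  assumes "bb P v' s1 = 0"
  shows "phi (outer s1 v1) (outer s1 v') = phi (outer s1 v') (outer s1 v1)"
proof -
  have sig: "phi (outer s1 v1) (outer s1 \<nu>) = phi (outer s1 \<nu>) (outer s1 v1)"
    if "bb P \<nu> s1 = 0" "bb P \<nu> s2 = 1" for \<nu>
    by (rule lemS[where f="outer s2 \<nu>"]) (simp_all add: jordan_outer n11 n12 that)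
  define k where "k = 1 - bb P v' s2"
  have "bb P (v' + k *s v2) s1 = 0" "bb P (v' + k *s v2) s2 = 1"
    using assms by (simp_all add: bb_add1 bb_diff1 bb_scale1 n21 n22 k_def)
  then have "phi (outer s1 v1) (outer s1 (v' + k *s v2)) = phi (outer s1 (v' + k *s v2)) (outer s1 v1)"
    by (rule sig)
  moreover have "phi (outer s1 v1) (outer s1 v2) = phi (outer s1 v2) (outer s1 v1)"
    by (rule sig) (simp_all add: n21 n22)
  ultimately show ?thesis
    by (simp add: outer_add2 outer_scale2 p_add1 p_add2 p_sc1 p_sc2)
qed

lemma K3:
  assumes "bb P v' s1 = 0" "bb P v1 s' = 0"
  shows "phi (outer s1 v') (outer s' v1) = phi (outer s' v1) (outer s1 v')"
  by (rule sym0) (simp_all add: jordan_outer assms)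

lemma Lsym: "phi (outer s1 v) (outer s v1) = phi (outer s v1) (outer s1 v)"
proof -
  interpret bil "\<lambda>v s. phi (outer s1 v) (outer s v1) - phi (outer s v1) (outer s1 v)"
    by unfold_locales (simp_all add: outer_add1 outer_add2 outer_scale1 outer_scale2 p_add1 p_add2 p_sc1 p_sc2 algebra_simps)
  define a where "a = bb P v s1"
  define b where "b = bb P v1 s"
  have e1: "bb P (v - a *s v1) s1 = 0" using n11 by (simp add: bb_diff1 bb_scale1 a_def)
  have e2: "bb P v1 (s - b *s s1) = 0" using n11 by (simp add: bb_diff2 bb_scale2 b_def)
  note dd = dec[OF n11, of v s, folded a_def b_def]
  show ?thesis using dd K1[OF e2] K2[OF e1] K3[OF e1 e2] by simp
qed

definition "cc = phi (outer s1 v1) (outer s1 v1) / 2"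
definition "tau u t = phi (outer u v1) (outer s1 t) - cc * bb P t u"

lemma main: "phi (outer u v) (outer s t) = bb P v s * tau u t + bb P t u * tau s v"
proof -
  interpret bil "\<lambda>t u. phi (outer u v) (outer s t) - bb P v s * tau u t - bb P t u * tau s v"
    by unfold_locales (simp_all add: tau_def outer_add1 outer_add2 outer_scale1 outer_scale2 p_add1 p_add2 p_sc1 p_sc2
         bb_add1 bb_add2 bb_scale1 bb_scale2 algebra_simps)
  have z: "phi (outer u' v) (outer s t') - bb P v s * tau u' t' - bb P t' u' * tau s v = 0"
    if "bb P t' u' = 0" for t' u'
    using C1[OF that, of v s] that by (simp add: tau_def)
  have c2: "phi (outer s1 v1) (outer s1 v1) = 2 * cc" using two by (simp add: cc_def)
  have "phi (outer s1 v) (outer s v1) - bb P v s * tau s1 v1 - bb P v1 s1 * tau s v = 0"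
    using Lsym[of v s] c2 n11 by (simp add: tau_def algebra_simps)
  then have "phi (outer u v) (outer s t) - bb P v s * tau u t = bb P t u * tau s v"
    using lemB[OF n11 z, where v=t and s=u] by simp
  then show ?thesis by (metis diff_eq_eq add.commute)
qed

definition "tauhat z = (\<Sum>i\<in>UNIV. \<Sum>l\<in>UNIV. z$i$l * tau (axis i 1) (axis l 1))"

lemma tauhat_lf: "linear_functional tauhat"
  by (simp add: linear_functional_def tauhat_def mscale_def algebra_simps sum.distrib sum_distrib_left)

lemma tauhat_outer: "tauhat (outer u t) = tau u t"
proof -
  have "tau u t = (\<Sum>i\<in>UNIV. \<Sum>l\<in>UNIV. u$i * t$l * tau (axis i 1) (axis l 1))"
    by (rule vbilin_expand)
      (simp_all add: tau_def outer_add1 outer_add2 outer_scale1 outer_scale2 p_add1 p_add2 p_sc1 p_sc2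
         bb_add1 bb_add2 bb_scale1 bb_scale2 algebra_simps)
  then show ?thesis by (simp add: tauhat_def outer_def)
qed

lemma unit_eq: "phi (outer a b) (outer c d) = tauhat (munn_jordan P (outer a b) (outer c d))"
  by (simp add: main jordan_outer lf_add[OF tauhat_lf] lf_scale[OF tauhat_lf] tauhat_outer)

lemma final: "phi x y = tauhat (munn_jordan P x y)"
proof -
  have m1: "linear_functional (\<lambda>x. tauhat (munn_jordan P x y))" for y
    by (simp add: linear_functional_def J_add1 J_scale1 lf_add[OF tauhat_lf] lf_scale[OF tauhat_lf])
  have m2: "linear_functional (\<lambda>y. tauhat (munn_jordan P x y))" for x
    by (simp add: linear_functional_def J_add2 J_scale2 lf_add[OF tauhat_lf] lf_scale[OF tauhat_lf])
  show ?thesis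
    apply (subst bilin_expand[of phi, OF l1 l2])
    apply (subst bilin_expand[of "\<lambda>x y. tauhat (munn_jordan P x y)", OF m1 m2])
    apply (simp only: unit_eq)
    done
qed

end


lemma rows_eq: "rows (P::'a::field^'m^'n) = range (\<lambda>j. P$j)"
  by (auto simp: rows_def row_def vec_lambda_eta)

lemma two_rows:
  fixes P :: "'a::field^'m^'n"
  assumes "rank P \<ge> 2"
  shows "\<exists>j1 j2. P$j1 \<noteq> 0 \<and> (\<forall>c. P$j2 \<noteq> c *s P$j1)"
proof (rule ccontr)
  assume na: "\<not> ?thesis"
  have r: "rank P = vec.dim (range (\<lambda>j. P$j))" by (simp add: row_rank_def_gen rows_eq)
  show False
  proof (cases "\<exists>j0. P$j0 \<noteq> 0")
    case True
    then obtain j0 where j0: "P$j0 \<noteq> 0" by blast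
    have "range (\<lambda>j. P$j) \<subseteq> vec.span {P$j0}"
    proof
      fix x assume "x \<in> range (\<lambda>j. P$j)"
      then obtain j where x: "x = P$j" by blast
      from na j0 obtain c where "P$j = c *s P$j0" by blast
      then show "x \<in> vec.span {P$j0}" using x by (simp add: vec.span_base vec.span_scale)
    qed
    then have "vec.dim (range (\<lambda>j. P$j)) \<le> card {P$j0}" by (intro vec.dim_le_card) auto
    then show False using r assms by simp
  next
    case False
    then have sub: "range (\<lambda>j. P$j) \<subseteq> vec.span {}" by auto
    have "vec.dim (range (\<lambda>j. P$j)) \<le> card ({}::('a^'m) set)"
      by (rule vec.dim_le_card[OF sub]) simp
    then have "vec.dim (range (\<lambda>j. P$j)) \<le> 0" by (simp only: card.empty)
    then show False using r assms by linarith
  qed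
qed

lemma axis_comp: "(axis j (1::'a::field) :: 'a^'n)$a = (if a = j then 1 else 0)"
  by (simp add: axis_def)

lemma mif: "(x::'a::field) * (if c then 1 else 0) = (if c then x else 0)" by simp

lemma bb_axis: "bb P (axis j 1) (axis k 1) = P$j$k"
proof -
  have "bb P (axis j 1) (axis k 1) = (\<Sum>a\<in>UNIV. \<Sum>b\<in>UNIV. (if a = j then 1 else 0) * P$a$b * (if b = k then 1 else 0))"
    by (simp only: bb_def axis_comp)
  also have "\<dots> = (\<Sum>a\<in>UNIV. if a = j then P$a$k else 0)"
  proof (rule sum.cong)
    fix a show "(\<Sum>b\<in>UNIV. (if a = j then 1 else 0) * P$a$b * (if b = k then 1 else 0)) = (if a = j then P$a$k else 0)"
      by (cases "a = j") (simp_all add: mif)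
  qed simp
  also have "\<dots> = P$j$k" by simp
  finally show ?thesis .
qed

lemma anchors:
  fixes P :: "'a::field^'m^'n"
  assumes "rank P \<ge> 2"
  shows "\<exists>v1 v2 s1 s2. bb P v1 s1 = 1 \<and> bb P v2 s2 = 1 \<and> bb P v1 s2 = 0 \<and> bb P v2 s1 = 0"
proof -
  obtain j1 j2 where r1: "P$j1 \<noteq> 0" and r2: "\<And>c. P$j2 \<noteq> c *s P$j1" using two_rows[OF assms] by blast
  obtain k where k: "P$j1$k \<noteq> 0" using r1 by (auto simp: vec_eq_iff)
  define l where "l = P$j2$k / P$j1$k"
  have "P$j2 - l *s P$j1 \<noteq> 0" using r2[of l] by auto
  then obtain k' where k': "P$j2$k' - l * P$j1$k' \<noteq> 0" by (auto simp: vec_eq_iff)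
  define mu where "mu = P$j2$k' - l * P$j1$k'"
  define s1 where "s1 = (1 / P$j1$k) *s (axis k 1 :: 'a^'m)"
  define s2 where "s2 = (1 / mu) *s (axis k' 1 :: 'a^'m)"
  define vA where "vA = (axis j1 1 :: 'a^'n)"
  define vB where "vB = axis j2 1 - l *s (axis j1 1 :: 'a^'n)"
  define rho where "rho = bb P vA s2"
  have A1: "bb P vA s1 = 1" using k by (simp add: vA_def s1_def bb_scale2 bb_axis)
  have B1: "bb P vB s1 = 0" using k by (simp add: vB_def s1_def bb_scale1 bb_scale2 bb_diff1 bb_axis l_def field_simps)
  have B2: "bb P vB s2 = 1" using k' by (simp add: vB_def s2_def bb_scale1 bb_scale2 bb_diff1 bb_axis mu_def field_simps)
  have "bb P (vA - rho *s vB) s1 = 1" "bb P vB s2 = 1" "bb P (vA - rho *s vB) s2 = 0" "bb P vB s1 = 0"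
    using A1 B1 B2 by (simp_all add: bb_diff1 bb_scale1 rho_def)
  then show ?thesis by blast
qed

lemma two_ne: "CHAR('a::field) \<noteq> 2 \<Longrightarrow> (2::'a) \<noteq> 0"
proof
  assume c: "CHAR('a) \<noteq> 2" and t: "(2::'a) = 0"
  have "of_nat 2 = (0::'a)" using t by simp
  then have d: "CHAR('a) dvd 2" by (simp only: of_nat_eq_0_iff_char_dvd)
  then have "CHAR('a) \<le> 2" by (rule dvd_imp_le) simp
  moreover have "CHAR('a) \<noteq> 0"
  proof
    assume "CHAR('a) = 0"
    with d show False by simp
  qed
  moreover have "CHAR('a) \<noteq> 1"
  proof
    assume "CHAR('a) = 1"
    then have "(1::'a) = 0" using of_nat_CHAR[where 'a='a] by simp
    then show False by simp
  qed
  ultimately show False using c by linarith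
qed


theorem theorem3p5:
  fixes P :: "'a::field^'m::finite^'n::finite"
  assumes "CHAR('a) \<noteq> 2" and "CHAR('a) \<noteq> 3"
    and "2 \<le> CARD('m)" and "2 \<le> CARD('n)"
    and "rank P \<ge> 2"
  shows "munn_zero_jordan_product_determined P TYPE('n \<times> 'm)"
  unfolding munn_zero_jordan_product_determined_def
proof (intro allI impI)
  fix phi :: "'a^'n^'m \<Rightarrow> 'a^'n^'m \<Rightarrow> 'a"
  assume b: "bilinear_functional phi" and h: "\<forall>x y. munn_jordan P x y = 0 \<longrightarrow> phi x y = 0"
  obtain v1 v2 s1 s2 where an: "bb P v1 s1 = 1" "bb P v2 s2 = 1" "bb P v1 s2 = 0" "bb P v2 s1 = 0"
    using anchors[OF assms(5)] by blast
  have "zj P phi v1 v2 s1 s2"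
    unfolding zj_def using b h an two_ne[OF assms(1)] by blast
  then interpret zj P phi v1 v2 s1 s2 .
  show "\<exists>\<tau>. linear_functional \<tau> \<and> (\<forall>x y. phi x y = \<tau> (munn_jordan P x y))"
    using tauhat_lf final by blast
qed

end
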